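(* At every stage of MAPTree, for every OR node $u$ for which $LB[u]$ has been assigned, $LB[u]\le f(u)$, and for every AND node $a\in\mathcal G'$, $LB[a]\le f(a)$, where $f$ denotes the true value.
   Context: Let $x_1,\dots,x_N\in\{0,1\}^F$ be a binary dataset $\mathcal X$ with labels $\mathcal Y\in\{0,1\}^N$, $[N]=\{1,\dots,N\}$. For $\mathcal I\subseteq[N]$, $f\in[F]$, $k\in\{0,1\}$ let $\mathcal I|_{f=k}=\{i\in\mathcal I:(x_i)_f=k\}$, $c^k(\mathcal I)=|\{i\in\mathcal I:y_i=k\}|$, $\mathcal V(\mathcal I)=\{f:\mathcal I|_{f=0}\neq\emptyset\text{ and }\mathcal I|_{f=1}\neq\emptyset\}$. Fix $\rho^1,\rho^0>0$, $\alpha\in(0,1)$, $\beta\ge0$; $\ell_{\rm leaf}(c^1,c^0)=B(c^1+\rho^1,c^0+\rho^0)/B(\rho^1,\rho^0)$ ($B$ the Beta function), $p_{\rm split}(d)=\alpha(1+d)^{-\beta}$, $p_{\rm leaf}(d,\mathcal I)=1$ if $\mathcal V(\mathcal I)=\emptyset$ else $1-p_{\rm split}(d)$, $p_{\rm inner}(d,\mathcal I)=0$ if $\mathcal V(\mathcal I)=\emptyset$ else $p_{\rm split}(d)/|\mathcal V(\mathcal I)|$; $-\log0=+\infty$, and a minimum over an empty set is $+\infty$. Graph $\mathcal G=\mathcal G_{\mathcal X,\mathcal Y}$: for nonempty $\mathcal I\subseteq[N]$, $d\in\{0,\dots,F\}$, an OR node $o_{\mathcal I,d}$ with terminal child $t_{\mathcal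 I,d}$ (edge cost $-\log p_{\rm leaf}(d,\mathcal I)-\log\ell_{\rm leaf}(c^1(\mathcal I),c^0(\mathcal I))$); for $d<F$, $f\in\mathcal V(\mathcal I)$, an AND child $a_{\mathcal I,d,f}$ (edge cost $-\log p_{\rm inner}(d,\mathcal I)$) with cost-$0$ edges to $o_{\mathcal I|_{f=0},d+1}$, $o_{\mathcal I|_{f=1},d+1}$; root $r=o_{[N],0}$; only nodes reachable from $r$ kept. A partial solution rooted at an OR node $u$ is a node set $\mathcal S\ni u$ of $\mathcal G$, all of whose nodes are reachable from $u$ inside $\mathcal S$, with every AND node of $\mathcal S$ having both children in $\mathcal S$ and every OR node exactly one child in $\mathcal S$; its cost is the sum of costs of edges $v\to w$ with $v,w\in\mathcal S$. The true value $f(u)$ of an OR node $u$ is the minimum cost of a partial solution rooted at $u$ in $\mathcal G$; for an AND node $a$ with children $o_0,o_1$, $f(a)=f(o_0)+f(o_1)$. Heuristic: $h(o_{\mathcal I,d})=-\max\{\log\ell_{\rm leaf}(c^1(\mathcal I),c^0(\mathcal I)),\log p_{\rm split}(d)+\log\ell_{\rm leaf}(c^1(\mathcal I),0)+\log\ell_{\rm leaf}(0,c^0(\mathcal I))\}$. MAPTree maintains a node set $\mathcal G'$, a set $\mathcal E$ of expanded OR nodes, and values $LB[u],UB[u]\in\mathbb R\cup\{+\infty\}$ for OR nodes ($UB[u]=+\infty$ until set); for an AND node $a$ with children $o_0,o_1$, $LB[a]=LB[o_0]+LB[o_1]$ and $UB[a]=UB[o_0]+UB[o_1]$. Initialize $\mathcal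 G'=\{r\}$, $\mathcal E=\emptyset$, $LB[r]=h(r)$, $UB[r]=+\infty$. While $LB[r]<UB[r]$ (and optionally while time remains): (1) $o:=r$; while $o\in\mathcal E$, choose an AND child $a^*$ of $o$ minimizing $\mathrm{cost}(o,a)+LB[a]$, with children $o_0$ (value-0 side) and $o_1$, and set $o:=o_0$ if $UB[o_0]-LB[o_0]>UB[o_1]-LB[o_1]$, else $o:=o_1$. (2) Add $o$ to $\mathcal E$ and its terminal child to $\mathcal G'$; for each AND child $a$ of $o$ with children $o_0,o_1$, add $a,o_0,o_1$ to $\mathcal G'$ and set $LB[o_0]:=h(o_0)$, $LB[o_1]:=h(o_1)$. (3) Starting from $Q=\{o\}$, repeatedly remove from $Q$ an OR node $u$ of maximal depth, compute $v=\min\{\min_a(\mathrm{cost}(u,a)+LB[a]),\mathrm{cost}(u,t_u)\}$ over the AND children $a$ and terminal child $t_u$ of $u$; if $v>LB[u]$, set $LB[u]:=v$ and add to $Q$ every OR node of $\mathcal G'$ that is the parent of an AND node of $\mathcal G'$ having $u$ as child. (4) The same with $UB$ in place of $LB$, updating when $v<UB[u]$. *)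

theory Defs
  imports "HOL-Analysis.Analysis"
begin

text \<open>Dataset: x_i in {0,1}^F for i in [N] = {1..N}, features f in [F] = {1..F};
  feature values and labels are encoded as bool (True = 1, False = 0).\<close>

record params =
  nN    :: nat
  nF    :: nat
  xs    :: "nat \<Rightarrow> nat \<Rightarrow> bool"   \<comment> \<open>xs i f = (x_i)_f\<close>
  ys    :: "nat \<Rightarrow> bool"
  rho1  :: real
  rho0  :: real
  alpha :: real
  beta  :: real

definition restr :: "params \<Rightarrow> nat set \<Rightarrow> nat \<Rightarrow> bool \<Rightarrow> nat set" where
  "restr P I f k = {i \<in> I. xs P i f = k}"

definition cnt :: "params \<Rightarrow> bool \<Rightarrow> nat set \<Rightarrow> nat" where
  "cnt P k I = card {i \<in> I. ys P i = k}"

definition Vset :: "params \<Rightarrow> nat set \<Rightarrow> nat set" where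
  "Vset P I = {f \<in> {1..nF P}. restr P I f False \<noteq> {} \<and> restr P I f True \<noteq> {}}"

definition ell_leaf :: "params \<Rightarrow> nat \<Rightarrow> nat \<Rightarrow> real" where
  "ell_leaf P c1 c0 = Beta (real c1 + rho1 P) (real c0 + rho0 P) / Beta (rho1 P) (rho0 P)"

definition p_split :: "params \<Rightarrow> nat \<Rightarrow> real" where
  "p_split P d = alpha P * (1 + real d) powr (- beta P)"

definition p_leaf :: "params \<Rightarrow> nat \<Rightarrow> nat set \<Rightarrow> real" where
  "p_leaf P d I = (if Vset P I = {} then 1 else 1 - p_split P d)"

definition p_inner :: "params \<Rightarrow> nat \<Rightarrow> nat set \<Rightarrow> real" where
  "p_inner P d I = (if Vset P I = {} then 0 else p_split P d / real (card (Vset P I)))"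

definition mlog :: "real \<Rightarrow> ereal" where
  "mlog x = (if x = 0 then \<infinity> else ereal (- ln x))"

datatype node =
    OrN "nat set" nat
  | AndN "nat set" nat nat
  | TermN "nat set" nat

fun is_or :: "node \<Rightarrow> bool" where
  "is_or (OrN _ _) = True" | "is_or _ = False"

fun is_and :: "node \<Rightarrow> bool" where
  "is_and (AndN _ _ _) = True" | "is_and _ = False"

fun is_term :: "node \<Rightarrow> bool" where
  "is_term (TermN _ _) = True" | "is_term _ = False"

fun depth :: "node \<Rightarrow> nat" where
  "depth (OrN _ d) = d" | "depth (AndN _ d _) = d" | "depth (TermN _ d) = d"

fun child0 :: "params \<Rightarrow> node \<Rightarrow> node" where
  "child0 P (AndN I d f) = OrN (restr P I f False) (Suc d)"
| "child0 P v = v"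

fun child1 :: "params \<Rightarrow> node \<Rightarrow> node" where
  "child1 P (AndN I d f) = OrN (restr P I f True) (Suc d)"
| "child1 P v = v"

inductive edge :: "params \<Rightarrow> node \<Rightarrow> node \<Rightarrow> bool" for P where
  or_term: "\<lbrakk>I \<noteq> {}; I \<subseteq> {1..nN P}; d \<le> nF P\<rbrakk> \<Longrightarrow> edge P (OrN I d) (TermN I d)"
| or_and: "\<lbrakk>I \<noteq> {}; I \<subseteq> {1..nN P}; d < nF P; f \<in> Vset P I\<rbrakk>
            \<Longrightarrow> edge P (OrN I d) (AndN I d f)"
| and_or0: "\<lbrakk>I \<noteq> {}; I \<subseteq> {1..nN P}; d < nF P; f \<in> Vset P I\<rbrakk>
            \<Longrightarrow> edge P (AndN I d f) (OrN (restr P I f False) (Suc d))"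
| and_or1: "\<lbrakk>I \<noteq> {}; I \<subseteq> {1..nN P}; d < nF P; f \<in> Vset P I\<rbrakk>
            \<Longrightarrow> edge P (AndN I d f) (OrN (restr P I f True) (Suc d))"

text \<open>Edge costs (only meaningful on edges).\<close>
fun ecost :: "params \<Rightarrow> node \<Rightarrow> node \<Rightarrow> ereal" where
  "ecost P (OrN I d) (TermN J e) =
     mlog (p_leaf P d I) + mlog (ell_leaf P (cnt P True I) (cnt P False I))"
| "ecost P (OrN I d) (AndN J e f) = mlog (p_inner P d I)"
| "ecost P _ _ = 0"

definition root :: "params \<Rightarrow> node" where
  "root P = OrN {1..nN P} 0"

definition Gnodes :: "params \<Rightarrow> node set" where
  "Gnodes P = {v. (edge P)\<^sup>*\<^sup>* (root P) v}"

definition Gedge :: "params \<Rightarrow> node \<Rightarrow> node \<Rightarrow> bool" where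
  "Gedge P v w \<longleftrightarrow> v \<in> Gnodes P \<and> w \<in> Gnodes P \<and> edge P v w"

definition psol :: "params \<Rightarrow> node \<Rightarrow> node set \<Rightarrow> bool" where
  "psol P u S \<longleftrightarrow>
     u \<in> S \<and> S \<subseteq> Gnodes P \<and>
     (\<forall>v\<in>S. (\<lambda>a b. a \<in> S \<and> b \<in> S \<and> Gedge P a b)\<^sup>*\<^sup>* u v) \<and>
     (\<forall>a\<in>S. is_and a \<longrightarrow> (\<forall>w. Gedge P a w \<longrightarrow> w \<in> S)) \<and>
     (\<forall>v\<in>S. is_or v \<longrightarrow> (\<exists>!w. w \<in> S \<and> Gedge P v w))"

definition scost :: "params \<Rightarrow> node set \<Rightarrow> ereal" where
  "scost P S = (\<Sum>e\<in>{(v, w). v \<in> S \<and> w \<in> S \<and> Gedge P v w}. ecost P (fst e) (snd e))"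

text \<open>True value of an OR node (minimum over the empty set is +\<infinity>).\<close>
definition fval :: "params \<Rightarrow> node \<Rightarrow> ereal" where
  "fval P u = (INF S \<in> {S. psol P u S}. scost P S)"

definition fvalA :: "params \<Rightarrow> node \<Rightarrow> ereal" where
  "fvalA P a = fval P (child0 P a) + fval P (child1 P a)"

fun hh :: "params \<Rightarrow> node \<Rightarrow> real" where
  "hh P (OrN I d) = - max (ln (ell_leaf P (cnt P True I) (cnt P False I)))
       (ln (p_split P d) + ln (ell_leaf P (cnt P True I) 0) + ln (ell_leaf P 0 (cnt P False I)))"
| "hh P _ = 0"

text \<open>Phase of the algorithm: selection (step 1, start of an iteration),
  LB propagation (step 3) with queue Q and expanded node ov, UB propagation (step 4).\<close>
datatype phase = Select | PropL "node set" node | PropU "node set"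

record state =
  Gp :: "node set"
  Ex :: "node set"
  LB :: "node \<Rightarrow> ereal"
  UB :: "node \<Rightarrow> ereal"
  ph :: phase

definition bndA :: "params \<Rightarrow> (node \<Rightarrow> ereal) \<Rightarrow> node \<Rightarrow> ereal" where
  "bndA P B a = B (child0 P a) + B (child1 P a)"

definition and_children :: "params \<Rightarrow> node \<Rightarrow> node set" where
  "and_children P u = {a. Gedge P u a \<and> is_and a}"

definition backup :: "params \<Rightarrow> (node \<Rightarrow> ereal) \<Rightarrow> node \<Rightarrow> ereal" where
  "backup P B u = Inf ((\<lambda>a. ecost P u a + bndA P B a) ` and_children P u
                       \<union> (\<lambda>t. ecost P u t) ` {t. Gedge P u t \<and> is_term t})"

definition parents_in :: "params \<Rightarrow> state \<Rightarrow> node \<Rightarrow> node set" where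
  "parents_in P s u = {p \<in> Gp s. is_or p \<and>
       (\<exists>a \<in> Gp s. is_and a \<and> Gedge P p a \<and> Gedge P a u)}"

inductive descend :: "params \<Rightarrow> state \<Rightarrow> node \<Rightarrow> node \<Rightarrow> bool" for P s where
  stop: "u \<notin> Ex s \<Longrightarrow> descend P s u u"
| down: "\<lbrakk>u \<in> Ex s; a \<in> and_children P u;
          \<forall>a' \<in> and_children P u. ecost P u a + bndA P (LB s) a \<le> ecost P u a' + bndA P (LB s) a';
          nxt = (if UB s (child0 P a) - LB s (child0 P a) > UB s (child1 P a) - LB s (child1 P a)
                 then child0 P a else child1 P a);
          descend P s nxt ov\<rbrakk> \<Longrightarrow> descend P s u ov"

definition expand :: "params \<Rightarrow> state \<Rightarrow> node \<Rightarrow> state" where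
  "expand P s ov =
    (let new = {w. \<exists>a \<in> and_children P ov. Gedge P a w} in
     s\<lparr> Ex := Ex s \<union> {ov},
        Gp := Gp s \<union> {t. Gedge P ov t \<and> is_term t} \<union> and_children P ov \<union> new,
        LB := (\<lambda>v. if v \<in> new then ereal (hh P v) else LB s v),
        ph := PropL {ov} ov \<rparr>)"

inductive mstep :: "params \<Rightarrow> state \<Rightarrow> state \<Rightarrow> bool" for P where
  iterate: "\<lbrakk>ph s = Select; LB s (root P) < UB s (root P); descend P s (root P) ov\<rbrakk>
            \<Longrightarrow> mstep P s (expand P s ov)"
| lb_up: "\<lbrakk>ph s = PropL Q ov; u \<in> Q; \<forall>u' \<in> Q. depth u' \<le> depth u;
           backup P (LB s) u > LB s u\<rbrakk>
          \<Longrightarrow> mstep P s (s\<lparr> LB := (LB s)(u := backup P (LB s) u),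
                              ph := PropL (Q - {u} \<union> parents_in P s u) ov \<rparr>)"
| lb_keep: "\<lbrakk>ph s = PropL Q ov; u \<in> Q; \<forall>u' \<in> Q. depth u' \<le> depth u;
           \<not> backup P (LB s) u > LB s u\<rbrakk>
          \<Longrightarrow> mstep P s (s\<lparr> ph := PropL (Q - {u}) ov \<rparr>)"
| lb_done: "ph s = PropL {} ov \<Longrightarrow> mstep P s (s\<lparr> ph := PropU {ov} \<rparr>)"
| ub_up: "\<lbrakk>ph s = PropU Q; u \<in> Q; \<forall>u' \<in> Q. depth u' \<le> depth u;
           backup P (UB s) u < UB s u\<rbrakk>
          \<Longrightarrow> mstep P s (s\<lparr> UB := (UB s)(u := backup P (UB s) u),
                              ph := PropU (Q - {u} \<union> parents_in P s u) \<rparr>)"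
| ub_keep: "\<lbrakk>ph s = PropU Q; u \<in> Q; \<forall>u' \<in> Q. depth u' \<le> depth u;
           \<not> backup P (UB s) u < UB s u\<rbrakk>
          \<Longrightarrow> mstep P s (s\<lparr> ph := PropU (Q - {u}) \<rparr>)"
| ub_done: "ph s = PropU {} \<Longrightarrow> mstep P s (s\<lparr> ph := Select \<rparr>)"

text \<open>Initial state; LB values at nodes other than the root are unassigned (arbitrary).\<close>
definition init_state :: "params \<Rightarrow> state \<Rightarrow> bool" where
  "init_state P s \<longleftrightarrow> Gp s = {root P} \<and> Ex s = {} \<and> LB s (root P) = ereal (hh P (root P))
     \<and> UB s = (\<lambda>_. \<infinity>) \<and> ph s = Select"

end

theory Submission
  imports Defs
begin


lemma Beta_pos: "x > 0 \<Longrightarrow> y > (0::real) \<Longrightarrow> Beta x y > 0"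
  by (simp add: Beta_def)

lemma Beta_left_step: assumes "x > 0" "y > (0::real)"
  shows "Beta (x + 1) y = Beta x y * (x / (x + y))"
proof -
  have "x \<notin> \<int>\<^sub>\<le>\<^sub>0" using assms nonpos_Ints_nonpos by force
  from Beta_plus1_left[OF this, of y] assms show ?thesis by (simp add: field_simps)
qed

lemma Beta_right_step: assumes "x > 0" "y > (0::real)"
  shows "Beta x (y + 1) = Beta x y * (y / (x + y))"
  using Beta_left_step[of y x] assms by (simp add: Beta_commute add.commute)

lemma rr_mono: assumes "0 < x" "x \<le> z" "0 < y"
  shows "Beta z (y + real b) / Beta z y \<le> Beta x (y + real b) / Beta x y"
proof (induction b)
  case 0 show ?case using assms Beta_pos[of x y] Beta_pos[of z y] by simp
next
  case (Suc b)
  have zs: "Beta z (y + real (Suc b)) = Beta z (y + real b) * ((y + real b) / (z + (y + real b)))"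
    using Beta_right_step[of z "y + real b"] assms by (simp add: add_ac)
  have xs: "Beta x (y + real (Suc b)) = Beta x (y + real b) * ((y + real b) / (x + (y + real b)))"
    using Beta_right_step[of x "y + real b"] assms by (simp add: add_ac)
  have f: "(y + real b) / (z + (y + real b)) \<le> (y + real b) / (x + (y + real b))"
    using assms by (intro divide_left_mono) auto
  have p1: "Beta z (y + real b) / Beta z y \<ge> 0" using assms Beta_pos[of z y] Beta_pos[of z "y + real b"] by simp
  have p2: "(y + real b) / (z + (y + real b)) \<ge> 0" using assms by simp
  have "Beta z (y + real (Suc b)) / Beta z y = (Beta z (y + real b) / Beta z y) * ((y + real b) / (z + (y + real b)))"
    unfolding zs by simp
  also have "\<dots> \<le> (Beta x (y + real b) / Beta x y) * ((y + real b) / (x + (y + real b)))"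
    by (rule mult_mono'[OF Suc f]) (use p1 p2 in auto) 
  also have "\<dots> = Beta x (y + real (Suc b)) / Beta x y" unfolding xs by simp
  finally show ?case .
qed



lemma lr_mono: assumes "0 < x" "x \<le> z" "0 < y"
  shows "Beta (x + real a) y / Beta x y \<le> Beta (z + real a) y / Beta z y"
proof (induction a)
  case 0 show ?case using assms Beta_pos[of x y] Beta_pos[of z y] by simp
next
  case (Suc a)
  have zs: "Beta (z + real (Suc a)) y = Beta (z + real a) y * ((z + real a) / (z + real a + y))"
    using Beta_left_step[of "z + real a" y] assms by (simp add: add_ac)
  have xs: "Beta (x + real (Suc a)) y = Beta (x + real a) y * ((x + real a) / (x + real a + y))"
    using Beta_left_step[of "x + real a" y] assms by (simp add: add_ac)
  have f: "(x + real a) / (x + real a + y) \<le> (z + real a) / (z + real a + y)"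
    using assms by (simp add: field_simps mult_right_mono)
  have p1: "Beta (x + real a) y / Beta x y \<ge> 0" using assms Beta_pos[of x y] Beta_pos[of "x + real a" y] by simp
  have p2: "(x + real a) / (x + real a + y) \<ge> 0" using assms by simp
  have "Beta (x + real (Suc a)) y / Beta x y = (Beta (x + real a) y / Beta x y) * ((x + real a) / (x + real a + y))"
    unfolding xs by simp
  also have "\<dots> \<le> (Beta (z + real a) y / Beta z y) * ((z + real a) / (z + real a + y))"
    by (rule mult_mono'[OF Suc f]) (use p1 p2 in auto) 
  also have "\<dots> = Beta (z + real (Suc a)) y / Beta z y" unfolding zs by simp
  finally show ?case .
qed

lemma ell_pos: "rho1 P > 0 \<Longrightarrow> rho0 P > 0 \<Longrightarrow> ell_leaf P a b > 0"
  unfolding ell_leaf_def by (intro divide_pos_pos Beta_pos) auto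

lemma F1: assumes "rho1 P > 0" "rho0 P > 0"
  shows "ell_leaf P a b \<le> ell_leaf P a 0 * ell_leaf P 0 b"
proof -
  let ?x = "rho1 P" and ?y = "rho0 P" and ?z = "real a + rho1 P"
  have m: "Beta ?z (?y + real b) / Beta ?z ?y \<le> Beta ?x (?y + real b) / Beta ?x ?y"
    by (rule rr_mono) (use assms in auto)
  have pz: "Beta ?z ?y > 0" and px: "Beta ?x ?y > 0" using assms by (auto intro: Beta_pos)
  have "Beta ?z (?y + real b) \<le> Beta ?z ?y * (Beta ?x (?y + real b) / Beta ?x ?y)"
    using m pz by (simp add: divide_le_eq mult.commute)
  note h = this
  hence "Beta ?z (?y + real b) / Beta ?x ?y \<le> (Beta ?z ?y / Beta ?x ?y) * (Beta ?x (?y + real b) / Beta ?x ?y)"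
    using divide_right_mono[OF h, of "Beta ?x ?y"] px by (simp add: field_simps)
  thus ?thesis unfolding ell_leaf_def by (simp add: add.commute)
qed

lemma F2gen: assumes "x > 0" "y > (0::real)"
  shows "(Beta (x + real a0) y / Beta x y) * (Beta (x + real a1) y / Beta x y) \<le> Beta (x + real (a0 + a1)) y / Beta x y"
proof -
  have m: "Beta (x + real a1) y / Beta x y \<le> Beta ((x + real a0) + real a1) y / Beta (x + real a0) y"
    by (rule lr_mono) (use assms in auto)
  have pz: "Beta (x + real a0) y > 0" and px: "Beta x y > 0" using assms by (auto intro: Beta_pos)
  have "(Beta (x + real a0) y / Beta x y) * (Beta (x + real a1) y / Beta x y)
     \<le> (Beta (x + real a0) y / Beta x y) * (Beta ((x + real a0) + real a1) y / Beta (x + real a0) y)"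
    using m pz px by (intro mult_left_mono) auto
  also have "\<dots> = Beta (x + real (a0 + a1)) y / Beta x y" using pz px by (simp add: add.assoc)
  finally show ?thesis .
qed

lemma F2a: assumes "rho1 P > 0" "rho0 P > 0"
  shows "ell_leaf P a0 0 * ell_leaf P a1 0 \<le> ell_leaf P (a0 + a1) 0"
  using F2gen[of "rho1 P" "rho0 P" a0 a1] assms unfolding ell_leaf_def by (simp add: add.commute)

lemma F2b: assumes "rho1 P > 0" "rho0 P > 0"
  shows "ell_leaf P 0 b0 * ell_leaf P 0 b1 \<le> ell_leaf P 0 (b0 + b1)"
  using F2gen[of "rho0 P" "rho1 P" b0 b1] assms unfolding ell_leaf_def by (simp add: add.commute Beta_commute)



lemma edge_Term[simp]: "\<not> edge P (TermN I d) w"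
  by (auto elim: edge.cases)

lemma edge_OrN: "edge P (OrN I d) w \<longleftrightarrow>
   (I \<noteq> {} \<and> I \<subseteq> {1..nN P} \<and> d \<le> nF P \<and> w = TermN I d) \<or>
   (\<exists>f. I \<noteq> {} \<and> I \<subseteq> {1..nN P} \<and> d < nF P \<and> f \<in> Vset P I \<and> w = AndN I d f)"
proof
  assume "edge P (OrN I d) w" thus "(I \<noteq> {} \<and> I \<subseteq> {1..nN P} \<and> d \<le> nF P \<and> w = TermN I d) \<or>
   (\<exists>f. I \<noteq> {} \<and> I \<subseteq> {1..nN P} \<and> d < nF P \<and> f \<in> Vset P I \<and> w = AndN I d f)"
    by (cases rule: edge.cases) blast+
next
  assume "(I \<noteq> {} \<and> I \<subseteq> {1..nN P} \<and> d \<le> nF P \<and> w = TermN I d) \<or>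
   (\<exists>f. I \<noteq> {} \<and> I \<subseteq> {1..nN P} \<and> d < nF P \<and> f \<in> Vset P I \<and> w = AndN I d f)"
  thus "edge P (OrN I d) w" by (elim disjE exE conjE) (simp_all add: edge.intros)
qed

lemma edge_AndN: "edge P (AndN I d f) w \<longleftrightarrow>
   I \<noteq> {} \<and> I \<subseteq> {1..nN P} \<and> d < nF P \<and> f \<in> Vset P I \<and>
   (w = OrN (restr P I f False) (Suc d) \<or> w = OrN (restr P I f True) (Suc d))"
proof
  assume "edge P (AndN I d f) w" thus "I \<noteq> {} \<and> I \<subseteq> {1..nN P} \<and> d < nF P \<and> f \<in> Vset P I \<and>
   (w = OrN (restr P I f False) (Suc d) \<or> w = OrN (restr P I f True) (Suc d))"
    by (cases rule: edge.cases) blast+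
next
  assume "I \<noteq> {} \<and> I \<subseteq> {1..nN P} \<and> d < nF P \<and> f \<in> Vset P I \<and>
   (w = OrN (restr P I f False) (Suc d) \<or> w = OrN (restr P I f True) (Suc d))"
  thus "edge P (AndN I d f) w" by (elim disjE exE conjE) (simp_all add: edge.intros)
qed

lemma edge_to_And: "edge P v (AndN I d f) \<Longrightarrow> v = OrN I d"
  by (auto elim: edge.cases)

fun meas :: "params \<Rightarrow> node \<Rightarrow> nat" where
  "meas P (OrN I d) = 3 * (nF P - d) + 2"
| "meas P (AndN I d f) = 3 * (nF P - d) + 1"
| "meas P (TermN I d) = 0"

lemma edge_meas: "edge P v w \<Longrightarrow> meas P w < meas P v"
  by (induction rule: edge.induct) auto

lemma edges_meas: "(edge P)\<^sup>*\<^sup>* v w \<Longrightarrow> meas P w \<le> meas P v"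
  by (induction rule: rtranclp_induct) (auto dest: edge_meas)

fun nset :: "node \<Rightarrow> nat set" where
  "nset (OrN I d) = I" | "nset (AndN I d f) = I" | "nset (TermN I d) = I"

lemma restr_sub: "restr P I f k \<subseteq> I" by (auto simp: restr_def)

lemma Vset_restr: "f \<in> Vset P I \<Longrightarrow> restr P I f k \<noteq> {}"
  by (cases k) (auto simp: Vset_def)

lemma edge_nset: "edge P v w \<Longrightarrow> nset w \<subseteq> nset v \<and> nset w \<noteq> {}"
  by (induction rule: edge.induct) (auto simp: restr_sub Vset_restr)

lemma edges_nset: "(edge P)\<^sup>*\<^sup>* v w \<Longrightarrow> nset w \<subseteq> nset v"
  by (induction rule: rtranclp_induct) (auto dest: edge_nset)

lemma edges_nset_ne: "(edge P)\<^sup>*\<^sup>* v w \<Longrightarrow> nset v \<noteq> {} \<Longrightarrow> nset w \<noteq> {}"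
  by (induction rule: rtranclp_induct) (auto dest: edge_nset)

lemma Gnodes_edge: "v \<in> Gnodes P \<Longrightarrow> edge P v w \<Longrightarrow> w \<in> Gnodes P"
  by (auto simp: Gnodes_def)

definition UU :: "params \<Rightarrow> node set" where
  "UU P = (\<lambda>(I,d). OrN I d) ` (Pow {1..nN P} \<times> {..nF P})
        \<union> (\<lambda>(I,d). TermN I d) ` (Pow {1..nN P} \<times> {..nF P})
        \<union> (\<lambda>(I,d,f). AndN I d f) ` (Pow {1..nN P} \<times> {..nF P} \<times> {..nF P})"

lemma finite_UU: "finite (UU P)" unfolding UU_def by auto

lemma edge_UU: "edge P v w \<Longrightarrow> w \<in> UU P"
proof (induction rule: edge.induct)
  case (or_term I d) then show ?case unfolding UU_def by auto
next
  case (or_and I d f)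
  hence "f \<le> nF P" by (auto simp: Vset_def)
  with or_and show ?case unfolding UU_def by (auto intro!: image_eqI[where x="(I,d,f)"])
next
  case (and_or0 I d f)
  hence "restr P I f False \<subseteq> {1..nN P}" using restr_sub by blast
  with and_or0 show ?case unfolding UU_def
    by (auto intro!: image_eqI[where x="(restr P I f False, Suc d)"])
next
  case (and_or1 I d f)
  hence "restr P I f True \<subseteq> {1..nN P}" using restr_sub by blast
  with and_or1 show ?case unfolding UU_def
    by (auto intro!: image_eqI[where x="(restr P I f True, Suc d)"])
qed

lemma finite_Gnodes: "finite (Gnodes P)"
proof -
  have "Gnodes P \<subseteq> insert (root P) (UU P)"
  proof
    fix v assume "v \<in> Gnodes P"
    hence "(edge P)\<^sup>*\<^sup>* (root P) v" by (simp add: Gnodes_def)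
    thus "v \<in> insert (root P) (UU P)" by (cases rule: rtranclp.cases) (auto dest: edge_UU)
  qed
  thus ?thesis by (meson finite_UU finite_insert finite_subset)
qed

lemma Gedge_edge: "Gedge P v w \<Longrightarrow> edge P v w" by (simp add: Gedge_def)

lemma psolD:
  assumes "psol P u S"
  shows "u \<in> S" "S \<subseteq> Gnodes P"
    "\<And>v. v \<in> S \<Longrightarrow> (\<lambda>a b. a \<in> S \<and> b \<in> S \<and> Gedge P a b)\<^sup>*\<^sup>* u v"
    "\<And>a w. a \<in> S \<Longrightarrow> is_and a \<Longrightarrow> Gedge P a w \<Longrightarrow> w \<in> S"
    "\<And>v. v \<in> S \<Longrightarrow> is_or v \<Longrightarrow> \<exists>!w. w \<in> S \<and> Gedge P v w"
  using assms unfolding psol_def by simp_all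

lemma psol_sub:
  assumes ps: "psol P u S" and x: "x \<in> S"
  defines "R \<equiv> (\<lambda>a b. a \<in> S \<and> b \<in> S \<and> Gedge P a b)"
  shows "psol P x {v \<in> S. R\<^sup>*\<^sup>* x v}"
proof -
  let ?S0 = "{v \<in> S. R\<^sup>*\<^sup>* x v}"
  have S0S: "?S0 \<subseteq> S" by blast
  have reach: "(\<lambda>a b. a \<in> ?S0 \<and> b \<in> ?S0 \<and> Gedge P a b)\<^sup>*\<^sup>* x v" if "R\<^sup>*\<^sup>* x v" for v
    using that
  proof (induction rule: rtranclp_induct)
    case base then show ?case by simp
  next
    case (step y z)
    have rz: "R\<^sup>*\<^sup>* x z" using step(1) step(2) by (rule rtranclp.rtrancl_into_rtrancl)
    have "y \<in> S" "z \<in> S" "Gedge P y z" using step(2) unfolding R_def by simp_all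
    hence "y \<in> ?S0" "z \<in> ?S0" "Gedge P y z" using step(1) rz by simp_all
    with step.IH show ?case by (simp add: rtranclp.rtrancl_into_rtrancl)
  qed
  show ?thesis unfolding psol_def
  proof (intro conjI ballI impI allI)
    show "x \<in> ?S0" using x by simp
    show "?S0 \<subseteq> Gnodes P" using psolD(2)[OF ps] by blast
  next
    fix v assume "v \<in> ?S0" thus "(\<lambda>a b. a \<in> ?S0 \<and> b \<in> ?S0 \<and> Gedge P a b)\<^sup>*\<^sup>* x v"
      using reach by simp
  next
    fix a w assume a: "a \<in> ?S0" "is_and a" "Gedge P a w"
    hence "w \<in> S" using psolD(4)[OF ps] S0S by blast
    with a have "R a w" by (simp add: R_def)
    have "R\<^sup>*\<^sup>* x a" using a(1) by simp
    hence "R\<^sup>*\<^sup>* x w" using \<open>R a w\<close> by (rule rtranclp.rtrancl_into_rtrancl)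
    thus "w \<in> ?S0" using \<open>w \<in> S\<close> by simp
  next
    fix v assume v: "v \<in> ?S0" "is_or v"
    have "\<exists>!w. w \<in> S \<and> Gedge P v w" using psolD(5)[OF ps] v by simp
    then obtain w where w: "w \<in> S" "Gedge P v w" and un: "\<And>w'. w' \<in> S \<and> Gedge P v w' \<Longrightarrow> w' = w"
      by blast
    have "R v w" using v w by (simp add: R_def)
    have "R\<^sup>*\<^sup>* x v" using v(1) by simp
    hence "R\<^sup>*\<^sup>* x w" using \<open>R v w\<close> by (rule rtranclp.rtrancl_into_rtrancl)
    hence "w \<in> ?S0" using w(1) by simp
    thus "\<exists>!w. w \<in> ?S0 \<and> Gedge P v w" using w un by blast
  qed
qed



definition EE :: "params \<Rightarrow> node set \<Rightarrow> (node \<times> node) set" where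
  "EE P X = {(v, w). v \<in> X \<and> w \<in> X \<and> Gedge P v w}"

lemma scost_EE: "scost P S = (\<Sum>e\<in>EE P S. ecost P (fst e) (snd e))"
  by (simp add: scost_def EE_def)

lemma psol_fin: "psol P u S \<Longrightarrow> finite S"
  unfolding psol_def using finite_Gnodes finite_subset by blast

lemma EE_fin: "finite S \<Longrightarrow> finite (EE P S)"
  by (rule finite_subset[of _ "S \<times> S"]) (auto simp: EE_def)

lemma ecost_And[simp]: "ecost P (AndN I d f) w = 0"
  by (cases w) auto

lemma rel_edges: "(\<lambda>a b. a \<in> S \<and> b \<in> S \<and> Gedge P a b)\<^sup>*\<^sup>* x v \<Longrightarrow> (edge P)\<^sup>*\<^sup>* x v"
  by (induction rule: rtranclp_induct) (auto simp: Gedge_def intro: rtranclp.rtrancl_into_rtrancl)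

lemma decomp:
  assumes ps: "psol P u S" and u: "u = OrN I d"
  shows "(\<exists>t. Gedge P u t \<and> is_term t \<and> scost P S = ecost P u t) \<or>
    (\<exists>f S0 S1. Gedge P u (AndN I d f) \<and> I \<noteq> {} \<and> I \<subseteq> {1..nN P} \<and> d < nF P \<and> f \<in> Vset P I \<and>
       psol P (OrN (restr P I f False) (Suc d)) S0 \<and> psol P (OrN (restr P I f True) (Suc d)) S1 \<and>
       S0 \<subset> S \<and> S1 \<subset> S \<and> scost P S = mlog (p_inner P d I) + scost P S0 + scost P S1)"
proof -
  define R where "R = (\<lambda>a b. a \<in> S \<and> b \<in> S \<and> Gedge P a b)"
  have uS: "u \<in> S" and SG: "S \<subseteq> Gnodes P" and reach: "\<And>v. v \<in> S \<Longrightarrow> R\<^sup>*\<^sup>* u v"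
    and andcl: "\<And>a w. a \<in> S \<Longrightarrow> is_and a \<Longrightarrow> Gedge P a w \<Longrightarrow> w \<in> S"
    and orun: "\<And>v. v \<in> S \<Longrightarrow> is_or v \<Longrightarrow> \<exists>!w. w \<in> S \<and> Gedge P v w"
    using psolD[OF ps] unfolding R_def by blast+
  have finS: "finite S" using ps by (rule psol_fin)
  obtain w where wS: "w \<in> S" and uw: "Gedge P u w" and un: "\<And>w'. w' \<in> S \<Longrightarrow> Gedge P u w' \<Longrightarrow> w' = w"
    using orun[OF uS] u by auto
  have fromw: "R\<^sup>*\<^sup>* w v" if "v \<in> S" "v \<noteq> u" for v
  proof -
    have "R\<^sup>*\<^sup>* u v" using reach that(1) .
    thus ?thesis
    proof (cases rule: converse_rtranclpE)
      case base with that show ?thesis by simp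
    next
      case (step y) 
      hence "y = w" using un unfolding R_def by blast
      with step show ?thesis by simp
    qed
  qed
  have "edge P u w" using uw by (simp add: Gedge_def)
  hence ecases: "(I \<noteq> {} \<and> I \<subseteq> {1..nN P} \<and> d \<le> nF P \<and> w = TermN I d) \<or>
   (\<exists>f. I \<noteq> {} \<and> I \<subseteq> {1..nN P} \<and> d < nF P \<and> f \<in> Vset P I \<and> w = AndN I d f)"
    using u edge_OrN by simp
  thus ?thesis
  proof
    assume "I \<noteq> {} \<and> I \<subseteq> {1..nN P} \<and> d \<le> nF P \<and> w = TermN I d"
    hence wt: "w = TermN I d" by simp
    have Sut: "S = {u, w}"
    proof
      show "{u, w} \<subseteq> S" using uS wS by simp
      show "S \<subseteq> {u, w}"
      proof
        fix v assume v: "v \<in> S"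
        show "v \<in> {u, w}"
        proof (cases "v = u")
          case False
          hence "R\<^sup>*\<^sup>* w v" using fromw v by simp
          hence "v = w"
            by (cases rule: converse_rtranclpE) (auto simp: R_def Gedge_def wt)
          thus ?thesis by simp
        qed simp
      qed
    qed
    have "EE P S = {(u, w)}"
    proof -
      have "\<not> Gedge P u u" using edge_meas[of P u u] by (auto simp: Gedge_def)
      moreover have "\<not> Gedge P w x" for x by (simp add: Gedge_def wt)
      ultimately show ?thesis using uw Sut by (auto simp: EE_def)
    qed
    hence "scost P S = ecost P u w" by (simp add: scost_EE)
    thus ?thesis using uw wt by auto
  next
    assume "\<exists>f. I \<noteq> {} \<and> I \<subseteq> {1..nN P} \<and> d < nF P \<and> f \<in> Vset P I \<and> w = AndN I d f"
    then obtain f where Ine: "I \<noteq> {}" and IN: "I \<subseteq> {1..nN P}" and dF: "d < nF P" and fV: "f \<in> Vset P I"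
      and wa: "w = AndN I d f" by blast
    define J0 where "J0 = restr P I f False"
    define J1 where "J1 = restr P I f True"
    define o0 where "o0 = OrN J0 (Suc d)"
    define o1 where "o1 = OrN J1 (Suc d)"
    have e0: "edge P w o0" and e1: "edge P w o1" unfolding wa o0_def o1_def J0_def J1_def
      using Ine IN dF fV by (simp_all add: edge_AndN)
    have wG: "w \<in> Gnodes P" using SG wS by blast
    have ge0: "Gedge P w o0" and ge1: "Gedge P w o1" using e0 e1 wG Gnodes_edge by (auto simp: Gedge_def)
    have o0S: "o0 \<in> S" and o1S: "o1 \<in> S" using andcl[OF wS] ge0 ge1 wa by auto
    define S0 where "S0 = {v \<in> S. R\<^sup>*\<^sup>* o0 v}"
    define S1 where "S1 = {v \<in> S. R\<^sup>*\<^sup>* o1 v}"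
    have ps0: "psol P o0 S0" unfolding S0_def R_def by (rule psol_sub[OF ps o0S])
    have ps1: "psol P o1 S1" unfolding S1_def R_def by (rule psol_sub[OF ps o1S])
    have ed0: "(edge P)\<^sup>*\<^sup>* o0 v" if "v \<in> S0" for v
      using that rel_edges[of S P o0 v] unfolding S0_def R_def by simp
    have ed1: "(edge P)\<^sup>*\<^sup>* o1 v" if "v \<in> S1" for v
      using that rel_edges[of S P o1 v] unfolding S1_def R_def by simp
    have mw0: "meas P o0 < meas P w" using edge_meas[OF e0] .
    have mw1: "meas P o1 < meas P w" using edge_meas[OF e1] .
    have muw: "meas P w < meas P u" using edge_meas[OF \<open>edge P u w\<close>] .
    have uS0: "u \<notin> S0" using ed0 edges_meas mw0 muw by fastforce
    have wS0: "w \<notin> S0" using ed0 edges_meas mw0 by fastforce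
    have uS1: "u \<notin> S1" using ed1 edges_meas mw1 muw by fastforce
    have wS1: "w \<notin> S1" using ed1 edges_meas mw1 by fastforce
    have J0ne: "J0 \<noteq> {}" and J1ne: "J1 \<noteq> {}" unfolding J0_def J1_def using fV Vset_restr by auto
    have disj: "S0 \<inter> S1 = {}"
    proof (rule ccontr)
      assume "S0 \<inter> S1 \<noteq> {}"
      then obtain v where v0: "v \<in> S0" and v1: "v \<in> S1" by blast
      have "nset v \<subseteq> J0" using edges_nset[OF ed0[OF v0]] by (simp add: o0_def)
      moreover have "nset v \<subseteq> J1" using edges_nset[OF ed1[OF v1]] by (simp add: o1_def)
      moreover have "nset v \<noteq> {}" using edges_nset_ne[OF ed0[OF v0]] J0ne by (simp add: o0_def)
      moreover have "J0 \<inter> J1 = {}" unfolding J0_def J1_def restr_def by auto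
      ultimately show False by blast
    qed
    have S0S: "S0 \<subseteq> S" and S1S: "S1 \<subseteq> S" unfolding S0_def S1_def by auto
    have Sdec: "v \<in> S0 \<or> v \<in> S1" if "v \<in> S" "v \<noteq> u" "v \<noteq> w" for v
    proof -
      have "R\<^sup>*\<^sup>* w v" using fromw that by simp
      thus ?thesis
      proof (cases rule: converse_rtranclpE)
        case base with that show ?thesis by simp
      next
        case (step y)
        hence "edge P w y" by (simp add: R_def Gedge_def)
        hence "y = o0 \<or> y = o1" unfolding wa o0_def o1_def J0_def J1_def by (simp add: edge_AndN)
        thus ?thesis using step that unfolding S0_def S1_def by auto
      qed
    qed
    have closed0: "x \<in> S0" if "v \<in> S0" "x \<in> S" "Gedge P v x" for v x
    proof -
      have "R v x" using that S0S by (auto simp: R_def)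
      moreover have "R\<^sup>*\<^sup>* o0 v" using that(1) by (simp add: S0_def)
      ultimately have "R\<^sup>*\<^sup>* o0 x" by (simp add: rtranclp.rtrancl_into_rtrancl)
      thus ?thesis using that(2) by (simp add: S0_def)
    qed
    have closed1: "x \<in> S1" if "v \<in> S1" "x \<in> S" "Gedge P v x" for v x
    proof -
      have "R v x" using that S1S by (auto simp: R_def)
      moreover have "R\<^sup>*\<^sup>* o1 v" using that(1) by (simp add: S1_def)
      ultimately have "R\<^sup>*\<^sup>* o1 x" by (simp add: rtranclp.rtrancl_into_rtrancl)
      thus ?thesis using that(2) by (simp add: S1_def)
    qed
    define T where "T = {(u, w), (w, o0), (w, o1)}"
    have EEdec: "EE P S = T \<union> EE P S0 \<union> EE P S1"
    proof
      show "EE P S \<subseteq> T \<union> EE P S0 \<union> EE P S1"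
      proof
        fix e assume "e \<in> EE P S"
        then obtain v x where e: "e = (v, x)" "v \<in> S" "x \<in> S" "Gedge P v x" by (auto simp: EE_def)
        show "e \<in> T \<union> EE P S0 \<union> EE P S1"
        proof (cases "v = u")
          case True
          hence "x = w" using un e(3,4) by blast
          thus ?thesis using True e(1) T_def by simp
        next
          case nu: False
          show ?thesis
          proof (cases "v = w")
            case True
            hence "edge P w x" using e by (simp add: Gedge_def)
            hence "x = o0 \<or> x = o1" unfolding wa o0_def o1_def J0_def J1_def by (simp add: edge_AndN)
            thus ?thesis using True e T_def by auto
          next
            case False
            with Sdec nu e have "v \<in> S0 \<or> v \<in> S1" by simp
            thus ?thesis using closed0 closed1 e by (auto simp: EE_def)
          qed
        qed
      qed
      show "T \<union> EE P S0 \<union> EE P S1 \<subseteq> EE P S"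
        using uS wS o0S o1S uw ge0 ge1 S0S S1S unfolding T_def EE_def by auto
    qed
    have fin0: "finite (EE P S0)" and fin1: "finite (EE P S1)" and finT: "finite T"
      using EE_fin psol_fin[OF ps0] psol_fin[OF ps1] T_def by auto
    have dT0: "T \<inter> EE P S0 = {}" using uS0 wS0 unfolding T_def EE_def by auto
    have dT1: "(T \<union> EE P S0) \<inter> EE P S1 = {}" using uS1 wS1 disj unfolding T_def EE_def by auto
    let ?c = "\<lambda>e. ecost P (fst e) (snd e)"
    have sT: "sum ?c T = ecost P u w"
    proof -
      have "u \<noteq> w" using u wa by simp
      hence "T = insert (u, w) {(w, o0), (w, o1)}" "(u, w) \<notin> {(w, o0), (w, o1)}" unfolding T_def by auto
      moreover have "sum ?c {(w, o0), (w, o1)} = 0" using wa by (intro sum.neutral) auto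
      ultimately show ?thesis by simp
    qed
    have "scost P S = sum ?c (T \<union> EE P S0 \<union> EE P S1)" by (simp add: scost_EE EEdec)
    also have "\<dots> = sum ?c (T \<union> EE P S0) + sum ?c (EE P S1)"
      by (rule sum.union_disjoint) (use fin0 fin1 finT dT1 in auto)
    also have "sum ?c (T \<union> EE P S0) = sum ?c T + sum ?c (EE P S0)"
      by (rule sum.union_disjoint) (use fin0 finT dT0 in auto)
    finally have "scost P S = ecost P u w + scost P S0 + scost P S1"
      by (simp add: sT scost_EE)
    moreover have "ecost P u w = mlog (p_inner P d I)" using u wa by simp
    moreover have "S0 \<subset> S" using S0S uS uS0 by blast
    moreover have "S1 \<subset> S" using S1S uS uS1 by blast
    ultimately have "Gedge P u (AndN I d f) \<and> I \<noteq> {} \<and> I \<subseteq> {1..nN P} \<and> d < nF P \<and> f \<in> Vset P I \<and>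
       psol P (OrN (restr P I f False) (Suc d)) S0 \<and> psol P (OrN (restr P I f True) (Suc d)) S1 \<and>
       S0 \<subset> S \<and> S1 \<subset> S \<and> scost P S = mlog (p_inner P d I) + scost P S0 + scost P S1"
      using uw wa Ine IN dF fV ps0 ps1 unfolding o0_def o1_def J0_def J1_def by simp
    thus ?thesis by blast
  qed
qed



context
  fixes P :: params
  assumes r1: "rho1 P > 0" and r0: "rho0 P > 0" and a0: "0 < alpha P" and a1: "alpha P < 1"
    and b0: "beta P \<ge> 0"
begin

lemma ps_bounds: "0 < p_split P d \<and> p_split P d < 1"
proof -
  have g1: "1 \<le> (1 + real d) powr beta P" using b0 by (intro ge_one_powr_ge_zero) auto
  have "(1 + real d) powr (- beta P) = inverse ((1 + real d) powr beta P)"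
    by (simp add: powr_minus)
  hence q: "0 < (1 + real d) powr (- beta P) \<and> (1 + real d) powr (- beta P) \<le> 1"
    using g1 by (simp add: inverse_le_1_iff)
  have le: "alpha P * (1 + real d) powr (- beta P) \<le> alpha P" using q a0 by (simp add: mult_left_le)
  have "0 < alpha P * (1 + real d) powr (- beta P)" using q a0 by simp
  thus ?thesis using le a1 unfolding p_split_def by linarith
qed

lemma pl_bounds: "0 < p_leaf P d I \<and> p_leaf P d I \<le> 1"
  using ps_bounds[of d] unfolding p_leaf_def by auto

lemma pi_bounds: assumes "f \<in> Vset P I"
  shows "0 < p_inner P d I \<and> p_inner P d I \<le> p_split P d"
proof -
  have fin: "finite (Vset P I)" unfolding Vset_def by simp
  have ne: "Vset P I \<noteq> {}" using assms by blast
  hence c: "real (card (Vset P I)) \<ge> 1" using fin by (simp add: Suc_le_eq card_gt_0_iff)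
  have "p_split P d / real (card (Vset P I)) \<le> p_split P d"
    using c ps_bounds[of d] by (simp add: divide_le_eq)
  moreover have "0 < p_split P d / real (card (Vset P I))" using c ps_bounds[of d] by simp
  ultimately show ?thesis unfolding p_inner_def using ne by simp
qed

lemma mlog_pos: "x > 0 \<Longrightarrow> mlog x = ereal (- ln x)"
  by (simp add: mlog_def)

definition gg :: "nat set \<Rightarrow> real" where
  "gg J = - ln (ell_leaf P (cnt P True J) 0) - ln (ell_leaf P 0 (cnt P False J))"

lemma cnt_split: "finite I \<Longrightarrow> cnt P k I = cnt P k (restr P I f False) + cnt P k (restr P I f True)"
proof -
  assume fin: "finite I"
  have "{i \<in> I. ys P i = k} = {i \<in> restr P I f False. ys P i = k} \<union> {i \<in> restr P I f True. ys P i = k}"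
    unfolding restr_def by auto
  moreover have "{i \<in> restr P I f False. ys P i = k} \<inter> {i \<in> restr P I f True. ys P i = k} = {}"
    unfolding restr_def by auto
  moreover have "finite {i \<in> restr P I f False. ys P i = k}" "finite {i \<in> restr P I f True. ys P i = k}"
    using fin unfolding restr_def by auto
  ultimately show ?thesis unfolding cnt_def by (simp add: card_Un_disjoint)
qed

lemma ell_p: "ell_leaf P a b > 0" using ell_pos r1 r0 by blast

lemma ln_prod_le: "x * y \<le> z \<Longrightarrow> 0 < x \<Longrightarrow> 0 < (y::real) \<Longrightarrow> ln x + ln y \<le> ln z"
proof -
  assume h: "x * y \<le> z" "0 < x" "0 < y"
  hence "ln (x * y) \<le> ln z" by (intro ln_mono) auto
  thus ?thesis using h by (simp add: ln_mult)
qed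

lemma gg_split: assumes "finite I"
  shows "gg I \<le> gg (restr P I f False) + gg (restr P I f True)"
proof -
  let ?J0 = "restr P I f False" and ?J1 = "restr P I f True"
  have c1: "cnt P True I = cnt P True ?J0 + cnt P True ?J1" and c0: "cnt P False I = cnt P False ?J0 + cnt P False ?J1"
    using cnt_split assms by blast+
  have A: "ell_leaf P (cnt P True ?J0) 0 * ell_leaf P (cnt P True ?J1) 0 \<le> ell_leaf P (cnt P True I) 0"
    unfolding c1 by (rule F2a[OF r1 r0])
  have B: "ell_leaf P 0 (cnt P False ?J0) * ell_leaf P 0 (cnt P False ?J1) \<le> ell_leaf P 0 (cnt P False I)"
    unfolding c0 by (rule F2b[OF r1 r0])
  have lA: "ln (ell_leaf P (cnt P True ?J0) 0) + ln (ell_leaf P (cnt P True ?J1) 0) \<le> ln (ell_leaf P (cnt P True I) 0)"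
    using A ell_p by (intro ln_prod_le)
  have lB: "ln (ell_leaf P 0 (cnt P False ?J0)) + ln (ell_leaf P 0 (cnt P False ?J1)) \<le> ln (ell_leaf P 0 (cnt P False I))"
    using B ell_p by (intro ln_prod_le)
  show ?thesis using lA lB unfolding gg_def by linarith
qed

lemma leaf_real: "- ln (ell_leaf P a b) \<ge> - ln (ell_leaf P a 0) - ln (ell_leaf P 0 b)"
proof -
  have "ell_leaf P a b \<le> ell_leaf P a 0 * ell_leaf P 0 b" by (rule F1[OF r1 r0])
  hence "ln (ell_leaf P a b) \<le> ln (ell_leaf P a 0 * ell_leaf P 0 b)"
    using ell_p by (intro ln_mono) auto
  moreover have "ln (ell_leaf P a 0 * ell_leaf P 0 b) = ln (ell_leaf P a 0) + ln (ell_leaf P 0 b)"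
    using ell_p[of a 0] ell_p[of 0 b] by (simp add: ln_mult)
  ultimately have "ln (ell_leaf P a b) \<le> ln (ell_leaf P a 0) + ln (ell_leaf P 0 b)" by simp
  thus ?thesis by linarith
qed

lemma leaf_cost:
  assumes "Gedge P (OrN I d) t" "is_term t"
  shows "ecost P (OrN I d) t = ereal (- ln (p_leaf P d I) - ln (ell_leaf P (cnt P True I) (cnt P False I)))"
proof -
  obtain J e where t: "t = TermN J e" using assms(2) by (cases t) auto
  show ?thesis using pl_bounds[of d I] ell_p unfolding t by (simp add: mlog_pos)
qed

lemma gg_bound: "psol P u S \<Longrightarrow> u = OrN I d \<Longrightarrow> ereal (gg I) \<le> scost P S"
proof (induction "card S" arbitrary: S u I d rule: less_induct)
  case less
  from decomp[OF less.prems]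
  show ?case
  proof
    assume "\<exists>t. Gedge P u t \<and> is_term t \<and> scost P S = ecost P u t"
    then obtain t where t: "Gedge P u t" "is_term t" "scost P S = ecost P u t" by blast
    have "ln (p_leaf P d I) \<le> 0" using pl_bounds[of d I] by simp
    hence "gg I \<le> - ln (p_leaf P d I) - ln (ell_leaf P (cnt P True I) (cnt P False I))"
      using leaf_real[of "cnt P True I" "cnt P False I"] unfolding gg_def by linarith
    thus ?thesis using t leaf_cost[of I d t] less.prems(2) by simp
  next
    assume "\<exists>f S0 S1. Gedge P u (AndN I d f) \<and> I \<noteq> {} \<and> I \<subseteq> {1..nN P} \<and> d < nF P \<and> f \<in> Vset P I \<and>
       psol P (OrN (restr P I f False) (Suc d)) S0 \<and> psol P (OrN (restr P I f True) (Suc d)) S1 \<and>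
       S0 \<subset> S \<and> S1 \<subset> S \<and> scost P S = mlog (p_inner P d I) + scost P S0 + scost P S1"
    then obtain f S0 S1 where IN: "I \<subseteq> {1..nN P}" and fV: "f \<in> Vset P I"
      and ps0: "psol P (OrN (restr P I f False) (Suc d)) S0" and ps1: "psol P (OrN (restr P I f True) (Suc d)) S1"
      and sub0: "S0 \<subset> S" and sub1: "S1 \<subset> S" and sc: "scost P S = mlog (p_inner P d I) + scost P S0 + scost P S1"
      by blast
    have finS: "finite S" using psol_fin[OF less.prems(1)] .
    have "card S0 < card S" using psubset_card_mono[OF finS sub0] .
    hence h0: "ereal (gg (restr P I f False)) \<le> scost P S0" using less.hyps ps0 by blast
    have "card S1 < card S" using psubset_card_mono[OF finS sub1] .
    hence h1: "ereal (gg (restr P I f True)) \<le> scost P S1" using less.hyps ps1 by blast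
    have pib: "0 < p_inner P d I \<and> p_inner P d I \<le> p_split P d" using pi_bounds[OF fV] .
    have lp: "ln (p_inner P d I) \<le> 0" using pib ps_bounds[of d] by simp
    have finI: "finite I" using IN finite_subset by blast
    have "ereal (gg I) \<le> ereal (- ln (p_inner P d I) + gg (restr P I f False) + gg (restr P I f True))"
      using gg_split[OF finI, of f] lp by simp
    also have "\<dots> = ereal (- ln (p_inner P d I)) + ereal (gg (restr P I f False)) + ereal (gg (restr P I f True))"
      by simp
    also have "\<dots> \<le> mlog (p_inner P d I) + scost P S0 + scost P S1"
      unfolding mlog_pos[OF conjunct1[OF pib]] by (intro add_mono order_refl h0 h1)
    finally show ?thesis using sc by simp
  qed
qed

lemma hh_bound: "psol P u S \<Longrightarrow> u = OrN I d \<Longrightarrow> ereal (hh P u) \<le> scost P S"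
proof -
  assume ps: "psol P u S" and u: "u = OrN I d"
  let ?L = "ln (ell_leaf P (cnt P True I) (cnt P False I))"
  let ?R = "ln (p_split P d) + ln (ell_leaf P (cnt P True I) 0) + ln (ell_leaf P 0 (cnt P False I))"
  have hhu: "hh P u = - max ?L ?R" using u by simp
  from decomp[OF ps u]
  show ?thesis
  proof
    assume "\<exists>t. Gedge P u t \<and> is_term t \<and> scost P S = ecost P u t"
    then obtain t where t: "Gedge P u t" "is_term t" "scost P S = ecost P u t" by blast
    have "ln (p_leaf P d I) \<le> 0" using pl_bounds[of d I] by simp
    hence "hh P u \<le> - ln (p_leaf P d I) - ?L" unfolding hhu by linarith
    thus ?thesis using t leaf_cost[of I d t] u by simp
  next
    assume "\<exists>f S0 S1. Gedge P u (AndN I d f) \<and> I \<noteq> {} \<and> I \<subseteq> {1..nN P} \<and> d < nF P \<and> f \<in> Vset P I \<and>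
       psol P (OrN (restr P I f False) (Suc d)) S0 \<and> psol P (OrN (restr P I f True) (Suc d)) S1 \<and>
       S0 \<subset> S \<and> S1 \<subset> S \<and> scost P S = mlog (p_inner P d I) + scost P S0 + scost P S1"
    then obtain f S0 S1 where IN: "I \<subseteq> {1..nN P}" and fV: "f \<in> Vset P I"
      and ps0: "psol P (OrN (restr P I f False) (Suc d)) S0" and ps1: "psol P (OrN (restr P I f True) (Suc d)) S1"
      and sc: "scost P S = mlog (p_inner P d I) + scost P S0 + scost P S1"
      by blast
    have h0: "ereal (gg (restr P I f False)) \<le> scost P S0" using gg_bound[OF ps0] by blast
    have h1: "ereal (gg (restr P I f True)) \<le> scost P S1" using gg_bound[OF ps1] by blast
    have pib: "0 < p_inner P d I \<and> p_inner P d I \<le> p_split P d" using pi_bounds[OF fV] .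
    have lp: "ln (p_inner P d I) \<le> ln (p_split P d)" using pib ps_bounds[of d] by simp
    have finI: "finite I" using IN finite_subset by blast
    have "hh P u \<le> - ?R" unfolding hhu by simp
    also have "- ?R = - ln (p_split P d) + gg I" unfolding gg_def by simp
    finally have "ereal (hh P u) \<le> ereal (- ln (p_inner P d I) + gg (restr P I f False) + gg (restr P I f True))"
      using gg_split[OF finI, of f] lp by simp
    also have "\<dots> = ereal (- ln (p_inner P d I)) + ereal (gg (restr P I f False)) + ereal (gg (restr P I f True))"
      by simp
    also have "\<dots> \<le> mlog (p_inner P d I) + scost P S0 + scost P S1"
      unfolding mlog_pos[OF conjunct1[OF pib]] by (intro add_mono order_refl h0 h1)
    finally show ?thesis using sc by simp
  qed
qed

lemma hh_le_fval: "is_or u \<Longrightarrow> ereal (hh P u) \<le> fval P u"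
proof -
  assume "is_or u"
  then obtain I d where u: "u = OrN I d" by (cases u) auto
  show ?thesis unfolding fval_def
    by (rule INF_greatest) (use hh_bound u in blast)
qed

end

lemma bellman:
  assumes u: "is_or u" and hyp: "\<And>a. a \<in> and_children P u \<Longrightarrow> bndA P B a \<le> fvalA P a"
  shows "backup P B u \<le> fval P u"
proof -
  obtain I d where ud: "u = OrN I d" using u by (cases u) auto
  show ?thesis unfolding fval_def
  proof (rule INF_greatest)
    fix S assume "S \<in> {S. psol P u S}"
    hence ps: "psol P u S" by simp
    from decomp[OF ps ud]
    show "backup P B u \<le> scost P S"
    proof
      assume "\<exists>t. Gedge P u t \<and> is_term t \<and> scost P S = ecost P u t"
      then obtain t where t: "Gedge P u t" "is_term t" "scost P S = ecost P u t" by blast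
      have "backup P B u \<le> ecost P u t" unfolding backup_def
        by (rule Inf_lower) (use t in blast)
      thus ?thesis using t by simp
    next
      assume "\<exists>f S0 S1. Gedge P u (AndN I d f) \<and> I \<noteq> {} \<and> I \<subseteq> {1..nN P} \<and> d < nF P \<and> f \<in> Vset P I \<and>
       psol P (OrN (restr P I f False) (Suc d)) S0 \<and> psol P (OrN (restr P I f True) (Suc d)) S1 \<and>
       S0 \<subset> S \<and> S1 \<subset> S \<and> scost P S = mlog (p_inner P d I) + scost P S0 + scost P S1"
      then obtain f S0 S1 where ga: "Gedge P u (AndN I d f)"
        and ps0: "psol P (OrN (restr P I f False) (Suc d)) S0" and ps1: "psol P (OrN (restr P I f True) (Suc d)) S1"
        and sc: "scost P S = mlog (p_inner P d I) + scost P S0 + scost P S1"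
        by blast
      let ?a = "AndN I d f"
      have aC: "?a \<in> and_children P u" using ga by (simp add: and_children_def)
      have "backup P B u \<le> ecost P u ?a + bndA P B ?a" unfolding backup_def
        by (rule Inf_lower) (use aC in blast)
      also have "\<dots> \<le> ecost P u ?a + fvalA P ?a" using hyp[OF aC] by (simp add: add_left_mono)
      also have "\<dots> \<le> ecost P u ?a + (scost P S0 + scost P S1)"
      proof (rule add_left_mono)
        have "fval P (OrN (restr P I f False) (Suc d)) \<le> scost P S0" unfolding fval_def
          by (rule INF_lower) (use ps0 in simp)
        moreover have "fval P (OrN (restr P I f True) (Suc d)) \<le> scost P S1" unfolding fval_def
          by (rule INF_lower) (use ps1 in simp)
        ultimately show "fvalA P ?a \<le> scost P S0 + scost P S1"
          by (simp add: fvalA_def add_mono)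
      qed
      finally show ?thesis using sc ud by (simp add: add.assoc)
    qed
  qed
qed



lemma edge_And_or: "edge P (AndN I d f) w \<Longrightarrow> is_or w"
  by (auto simp: edge_AndN)

lemma ac_child:
  assumes "a \<in> and_children P p"
  shows "Gedge P a (child0 P a) \<and> Gedge P a (child1 P a) \<and> is_or (child0 P a) \<and> is_or (child1 P a)"
proof -
  from assms have g: "Gedge P p a" and ia: "is_and a" by (auto simp: and_children_def)
  obtain I d f where a: "a = AndN I d f" using ia by (cases a) auto
  have e: "edge P p a" and pG: "p \<in> Gnodes P" and aG: "a \<in> Gnodes P" using g by (auto simp: Gedge_def)
  have p: "p = OrN I d" using e a edge_to_And by blast
  have prem: "I \<noteq> {} \<and> I \<subseteq> {1..nN P} \<and> d < nF P \<and> f \<in> Vset P I" using e unfolding p a by (auto simp: edge_OrN)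
  have e0: "edge P a (child0 P a)" and e1: "edge P a (child1 P a)" using prem unfolding a by (auto simp: edge_AndN)
  show ?thesis using e0 e1 aG Gnodes_edge unfolding Gedge_def by (auto simp: a)
qed

lemma ac_unique: "Gedge P p a \<Longrightarrow> a \<in> and_children P p' \<Longrightarrow> p = p'"
proof -
  assume g: "Gedge P p a" and ac: "a \<in> and_children P p'"
  from ac have g': "Gedge P p' a" and ia: "is_and a" by (auto simp: and_children_def)
  obtain I d f where a: "a = AndN I d f" using ia by (cases a) auto
  show "p = p'" using g g' edge_to_And unfolding Gedge_def a by blast
qed

definition INV :: "params \<Rightarrow> state \<Rightarrow> bool" where
  "INV P s \<longleftrightarrow>
    (\<forall>p\<in>Ex s. \<forall>a\<in>and_children P p. a \<in> Gp s \<and> child0 P a \<in> Gp s \<and> child1 P a \<in> Gp s)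
  \<and> (\<forall>a\<in>Gp s. is_and a \<longrightarrow> (\<exists>p\<in>Ex s. a \<in> and_children P p))
  \<and> (\<forall>u\<in>Gp s. is_or u \<longrightarrow> LB s u \<le> fval P u)
  \<and> (\<forall>Q ov. ph s = PropL Q ov \<longrightarrow> Q \<subseteq> Ex s)"

lemma INV_and:
  assumes "INV P s" "a \<in> Gp s" "is_and a"
  shows "bndA P (LB s) a \<le> fvalA P a"
proof -
  obtain p where p: "p \<in> Ex s" "a \<in> and_children P p" using assms unfolding INV_def by blast
  hence "child0 P a \<in> Gp s" "child1 P a \<in> Gp s" using assms(1) unfolding INV_def by blast+
  moreover have "is_or (child0 P a)" "is_or (child1 P a)" using ac_child[OF p(2)] by auto
  ultimately have "LB s (child0 P a) \<le> fval P (child0 P a)" "LB s (child1 P a) \<le> fval P (child1 P a)"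
    using assms(1) unfolding INV_def by blast+
  thus ?thesis unfolding bndA_def fvalA_def by (rule add_mono)
qed

lemma INV_step:
  assumes r1: "rho1 P > 0" and r0: "rho0 P > 0" and a0: "0 < alpha P" and a1: "alpha P < 1"
    and b0: "beta P \<ge> 0"
  assumes st: "mstep P s s'" and inv: "INV P s"
  shows "INV P s'"
  using st
proof (cases rule: mstep.cases)
  case (iterate ov)
  define new where "new = {w. \<exists>a \<in> and_children P ov. Gedge P a w}"
  have s': "s' = s\<lparr> Ex := Ex s \<union> {ov},
        Gp := Gp s \<union> {t. Gedge P ov t \<and> is_term t} \<union> and_children P ov \<union> new,
        LB := (\<lambda>v. if v \<in> new then ereal (hh P v) else LB s v),
        ph := PropL {ov} ov \<rparr>" using iterate(1) unfolding expand_def new_def Let_def by simp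
  have newor: "is_or w" if wn: "w \<in> new" for w
  proof -
    obtain a where a: "a \<in> and_children P ov" "Gedge P a w" using wn new_def by blast
    obtain I d f where "a = AndN I d f" using a(1) by (cases a) (auto simp: and_children_def)
    thus ?thesis using a(2) edge_And_or by (auto simp: Gedge_def)
  qed
  have I1: "\<forall>p\<in>Ex s. \<forall>a\<in>and_children P p. a \<in> Gp s \<and> child0 P a \<in> Gp s \<and> child1 P a \<in> Gp s"
    and I2: "\<forall>a\<in>Gp s. is_and a \<longrightarrow> (\<exists>p\<in>Ex s. a \<in> and_children P p)"
    and I3: "\<forall>u\<in>Gp s. is_or u \<longrightarrow> LB s u \<le> fval P u" using inv unfolding INV_def by blast+
  have sel: "Ex s' = Ex s \<union> {ov}"
    "Gp s' = Gp s \<union> {t. Gedge P ov t \<and> is_term t} \<union> and_children P ov \<union> new"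
    "LB s' = (\<lambda>v. if v \<in> new then ereal (hh P v) else LB s v)"
    "ph s' = PropL {ov} ov" using s' by simp_all
  let ?G = "Gp s \<union> {t. Gedge P ov t \<and> is_term t} \<union> and_children P ov \<union> new"
  have c1: "\<forall>p\<in>Ex s \<union> {ov}. \<forall>a\<in>and_children P p. a \<in> ?G \<and> child0 P a \<in> ?G \<and> child1 P a \<in> ?G"
  proof (intro ballI)
    fix p a assume p: "p \<in> Ex s \<union> {ov}" and a: "a \<in> and_children P p"
    show "a \<in> ?G \<and> child0 P a \<in> ?G \<and> child1 P a \<in> ?G"
    proof (cases "p \<in> Ex s")
      case True thus ?thesis using I1 a by blast
    next
      case False
      hence "p = ov" using p by simp
      thus ?thesis using a ac_child[OF a] unfolding new_def by blast
    qed
  qed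
  have c2: "\<forall>a\<in>?G. is_and a \<longrightarrow> (\<exists>p\<in>Ex s \<union> {ov}. a \<in> and_children P p)"
  proof (intro ballI impI)
    fix a assume a: "a \<in> ?G" "is_and a"
    have "a \<notin> new"
    proof
      assume "a \<in> new" hence "is_or a" by (rule newor)
      thus False using a(2) by (cases a) auto
    qed
    moreover have "\<not> is_term a" using a(2) by (cases a) auto
    ultimately have "a \<in> Gp s \<or> a \<in> and_children P ov" using a(1) by blast
    thus "\<exists>p\<in>Ex s \<union> {ov}. a \<in> and_children P p" using I2 a(2) by blast
  qed
  have c3: "\<forall>u\<in>?G. is_or u \<longrightarrow> (if u \<in> new then ereal (hh P u) else LB s u) \<le> fval P u"
  proof (intro ballI impI)
    fix u assume u: "u \<in> ?G" "is_or u"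
    show "(if u \<in> new then ereal (hh P u) else LB s u) \<le> fval P u"
    proof (cases "u \<in> new")
      case True thus ?thesis using hh_le_fval[OF r1 r0 a0 a1 b0 u(2)] by simp
    next
      case False
      have "\<not> is_term u" "\<not> is_and u" using u(2) by (cases u; simp)+
      hence "u \<in> Gp s" using u(1) False by (auto simp: and_children_def)
      thus ?thesis using I3 u(2) False by simp
    qed
  qed
  show ?thesis unfolding INV_def sel using c1 c2 c3 by simp
next
  case (lb_up Q ov u)
  have I1: "\<forall>p\<in>Ex s. \<forall>a\<in>and_children P p. a \<in> Gp s \<and> child0 P a \<in> Gp s \<and> child1 P a \<in> Gp s"
    and I2: "\<forall>a\<in>Gp s. is_and a \<longrightarrow> (\<exists>p\<in>Ex s. a \<in> and_children P p)"
    and I3: "\<forall>u\<in>Gp s. is_or u \<longrightarrow> LB s u \<le> fval P u"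
    and I4: "Q \<subseteq> Ex s" using inv lb_up(2) unfolding INV_def by blast+
  have uE: "u \<in> Ex s" using I4 lb_up(3) by blast
  have bu: "backup P (LB s) u \<le> fval P u" if "is_or u"
  proof (rule bellman[OF that])
    fix a assume a: "a \<in> and_children P u"
    have "a \<in> Gp s" using I1 uE a by blast
    moreover have "is_and a" using a by (simp add: and_children_def)
    ultimately show "bndA P (LB s) a \<le> fvalA P a" using INV_and[OF inv] by blast
  qed
  have par: "parents_in P s u \<subseteq> Ex s"
  proof
    fix p assume "p \<in> parents_in P s u"
    then obtain a where a: "a \<in> Gp s" "is_and a" "Gedge P p a" unfolding parents_in_def by blast
    then obtain p' where "p' \<in> Ex s" "a \<in> and_children P p'" using I2 by blast
    thus "p \<in> Ex s" using ac_unique[OF a(3)] by blast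
  qed
  show ?thesis unfolding INV_def lb_up(1)
    using I1 I2 I3 I4 bu par by auto
next
  case (lb_keep Q ov u)
  thus ?thesis using inv unfolding INV_def by auto
next
  case (lb_done ov)
  thus ?thesis using inv unfolding INV_def by auto
next
  case (ub_up Q u)
  thus ?thesis using inv unfolding INV_def by auto
next
  case (ub_keep Q u)
  thus ?thesis using inv unfolding INV_def by auto
next
  case ub_done
  thus ?thesis using inv unfolding INV_def by auto
qed

theorem lemma18:
  fixes P :: params and s0 s :: state
  assumes "rho1 P > 0" and "rho0 P > 0"
    and "0 < alpha P" and "alpha P < 1" and "beta P \<ge> 0"
    and "init_state P s0"
    and "(mstep P)\<^sup>*\<^sup>* s0 s"
  shows "(\<forall>u \<in> Gp s. is_or u \<longrightarrow> LB s u \<le> fval P u)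
       \<and> (\<forall>a \<in> Gp s. is_and a \<longrightarrow> bndA P (LB s) a \<le> fvalA P a)"
proof -
  have "INV P s0"
  proof -
    have "is_or (root P)" by (simp add: root_def)
    hence "ereal (hh P (root P)) \<le> fval P (root P)" using hh_le_fval assms(1-5) by blast
    thus ?thesis using assms(6) unfolding INV_def init_state_def by (simp add: root_def)
  qed
  have "INV P s" using assms(7) \<open>INV P s0\<close>
    by (induction rule: rtranclp_induct) (use INV_step assms(1-5) in blast)+
  thus ?thesis using INV_and unfolding INV_def by blast
qed


end
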